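(* Let $n,q$ be positive integers, $\sigma>0$, $s>0$, $\mu=s^2/\sigma^2$, and let $h(\mathbf X\mid\hat{\mathbf W})$ be the average differential entropy of the Gaussian mixture described in the context. Then $$h(\mathbf X\mid\hat{\mathbf W})=\frac n2\ln 2\pi\sigma^2-\Big(\frac\mu q\Big)^{n/2}(2\pi)^{-qn/2}\,\frac1q\sum_{j=1}^q\int_{(\mathbb R^n)^q}d\mathbf z_1\cdots d\mathbf z_q\;e^{-\frac12\sum_a\|\mathbf z_a\|^2+\frac1{2q}\|\sum_a\mathbf z_a\|^2-\frac\mu2\|\mathbf z_j\|^2}\,\ln\frac1q\sum_{k=1}^q e^{-\frac\mu2\|\mathbf z_k\|^2}.$$
   Context: $\mathbf W_1,\dots,\mathbf W_q$ are i.i.d. Gaussian random vectors in $\mathbb R^n$ with mean $0$ and covariance $s^2\mathbf 1_n$; given $\hat{\mathbf W}=\hat{\mathbf w}=(\mathbf w_1,\dots,\mathbf w_q)$, $\mathbf X\in\mathbb R^n$ has density $f(\mathbf x\mid\hat{\mathbf w})=(2\pi\sigma^2)^{-n/2}\frac1q\sum_{j=1}^q\exp\{-\|\mathbf x-\mathbf w_j\|^2/(2\sigma^2)\}$. $h(\mathbf X\mid\hat{\mathbf W})=-\int f_{\hat{\mathbf W}}(\hat{\mathbf w})\int f(\mathbf x\mid\hat{\mathbf w})\ln f(\mathbf x\mid\hat{\mathbf w})\,d\mathbf x\,d\hat{\mathbf w}$ (natural log), the average over $\hat{\mathbf w}$ of the differential entropy of the mixture. All sums over $a$ run from $1$ to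 $q$. *)

theory Defs
  imports "HOL-Analysis.Analysis" "HOL-Probability.Probability"
begin

text \<open>Here \<open>n = CARD('n)\<close>, \<open>q = CARD('q)\<close>.\<close>
definition W_density :: "real \<Rightarrow> real^'n::finite^'q::finite \<Rightarrow> real" where
  "W_density s w = (\<Prod>j\<in>UNIV. \<Prod>i\<in>UNIV. normal_density 0 s (w $ j $ i))"

definition mix_density :: "real \<Rightarrow> real^'n::finite \<Rightarrow> real^'n^'q::finite \<Rightarrow> real" where
  "mix_density \<sigma> x w =
     (2 * pi * \<sigma>\<^sup>2) powr (- real CARD('n) / 2) * (1 / real CARD('q)) *
     (\<Sum>j\<in>UNIV. exp (- (norm (x - (w $ j)))\<^sup>2 / (2 * \<sigma>\<^sup>2)))"

end

theory Submission
  imports Defs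
begin


definition gd :: "real \<Rightarrow> 'a::euclidean_space \<Rightarrow> real" where
  "gd \<sigma> x = (2 * pi * \<sigma>\<^sup>2) powr (- real DIM('a) / 2) * exp (- (norm x)\<^sup>2 / (2 * \<sigma>\<^sup>2))"

lemma gd_nonneg: "0 \<le> gd \<sigma> x" by (simp add: gd_def)

lemma gd_pos: "\<sigma> \<noteq> 0 \<Longrightarrow> 0 < gd \<sigma> x" by (simp add: gd_def)

lemma gd_prod:
  assumes "\<sigma> > 0"
  shows "gd \<sigma> (x::'a::euclidean_space) = (\<Prod>b\<in>Basis. normal_density 0 \<sigma> (x \<bullet> b))"
proof -
  have nd: "normal_density 0 \<sigma> t = (2 * pi * \<sigma>\<^sup>2) powr (- 1 / 2) * exp (- t\<^sup>2 / (2 * \<sigma>\<^sup>2))" for t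
    using assms by (simp add: normal_density_def powr_minus_divide powr_half_sqrt[symmetric])
  have n2: "(norm x)\<^sup>2 = (\<Sum>b\<in>Basis. (x \<bullet> b)\<^sup>2)"
    unfolding power2_norm_eq_inner by (subst euclidean_inner) (simp add: power2_eq_square)
  have "(\<Prod>b\<in>Basis. normal_density 0 \<sigma> (x \<bullet> b))
      = ((2 * pi * \<sigma>\<^sup>2) powr (- 1 / 2)) ^ DIM('a) * exp (\<Sum>b\<in>Basis. - (x \<bullet> b)\<^sup>2 / (2 * \<sigma>\<^sup>2))"
    by (simp add: nd prod.distrib exp_sum)
  also have "\<dots> = gd \<sigma> x"
    using assms by (simp add: gd_def powr_power n2 sum_divide_distrib[symmetric] sum_negf)
  finally show ?thesis ..
qed

lemma gd_int0:
  assumes "\<sigma> > 0"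
  shows "(\<integral>\<^sup>+x. ennreal (gd \<sigma> (x::'a::euclidean_space)) \<partial>lborel) = 1"
proof -
  have one: "(\<integral>\<^sup>+x. ennreal (normal_density 0 \<sigma> x) \<partial>lborel) = 1"
    by (subst nn_integral_eq_integral) (auto simp: assms)
  have "(\<integral>\<^sup>+x. ennreal (gd \<sigma> (x::'a)) \<partial>lborel) = (\<integral>\<^sup>+x. (\<Prod>b\<in>Basis. ennreal (normal_density 0 \<sigma> ((x::'a) \<bullet> b))) \<partial>lborel)"
    using assms by (simp add: gd_prod prod_ennreal)
  also have "\<dots> = 1"
    by (subst nn_integral_lborel_prod) (auto simp: one)
  finally show ?thesis .
qed

lemma gd_int:
  assumes "\<sigma> > 0"
  shows "(\<integral>\<^sup>+x. ennreal (gd \<sigma> ((x::'a::euclidean_space) - c)) \<partial>lborel) = 1"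
proof -
  have [measurable]: "gd \<sigma> \<in> borel_measurable (borel :: 'a measure)"
    unfolding gd_def[abs_def] by measurable
  have "(\<integral>\<^sup>+x. ennreal (gd \<sigma> ((x::'a) - c)) \<partial>lborel) = (\<integral>\<^sup>+x. ennreal (gd \<sigma> ((x::'a) - c)) \<partial>distr lborel borel ((+) c))"
    by (simp add: lborel_distr_plus)
  also have "\<dots> = (\<integral>\<^sup>+x. ennreal (gd \<sigma> (x::'a)) \<partial>lborel)"
    by (subst nn_integral_distr) auto
  finally show ?thesis using gd_int0[OF assms] by simp
qed



lemma norm_sq_vec: "(norm (w::'b::real_normed_vector^'q::finite))\<^sup>2 = (\<Sum>a\<in>UNIV. (norm (w$a))\<^sup>2)"
  unfolding norm_vec_def L2_set_def by (simp add: sum_nonneg)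

lemma gd_vec1:
  assumes "s > 0"
  shows "(\<Prod>i\<in>UNIV. normal_density 0 s ((x::real^'n::finite) $ i)) = gd s x"
proof -
  have nd: "normal_density 0 s t = (2 * pi * s\<^sup>2) powr (- 1 / 2) * exp (- t\<^sup>2 / (2 * s\<^sup>2))" for t
    using assms by (simp add: normal_density_def powr_minus_divide powr_half_sqrt[symmetric])
  have "(\<Prod>i\<in>UNIV. normal_density 0 s (x $ i))
      = ((2 * pi * s\<^sup>2) powr (- 1 / 2)) ^ CARD('n) * exp (\<Sum>i\<in>UNIV. - (x $ i)\<^sup>2 / (2 * s\<^sup>2))"
    by (simp add: nd prod.distrib exp_sum)
  also have "\<dots> = gd s x"
    using assms by (simp add: gd_def powr_power norm_sq_vec sum_divide_distrib[symmetric] sum_negf)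
  finally show ?thesis .
qed

lemma gd_vec2:
  assumes "s > 0"
  shows "(\<Prod>j\<in>UNIV. gd s ((w::real^'n::finite^'q::finite) $ j)) = gd s w"
proof -
  have "(\<Prod>j\<in>UNIV. gd s (w $ j))
      = ((2 * pi * s\<^sup>2) powr (- real CARD('n) / 2)) ^ CARD('q) * exp (\<Sum>j\<in>UNIV. - (norm (w $ j))\<^sup>2 / (2 * s\<^sup>2))"
    by (simp add: gd_def prod.distrib exp_sum)
  also have "\<dots> = gd s w"
    using assms by (simp add: gd_def powr_power norm_sq_vec[of w] sum_divide_distrib[symmetric] sum_negf mult.commute)
  finally show ?thesis .
qed

lemma W_density_gd: "s > 0 \<Longrightarrow> W_density s w = gd s w"
  unfolding W_density_def by (simp add: gd_vec1 gd_vec2)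

lemma mix_gd: "mix_density \<sigma> x w = 1 / real CARD('q) * (\<Sum>j\<in>UNIV. gd \<sigma> (x - (w::real^'n::finite^'q::finite) $ j))"
  unfolding mix_density_def gd_def by (simp add: sum_distrib_left)



definition Hx :: "real \<Rightarrow> real^'n::finite \<Rightarrow> real^'n^'q::finite \<Rightarrow> real" where
  "Hx \<sigma> x w = - ln (1 / real CARD('q) * (\<Sum>k\<in>UNIV. exp (- (norm (x - w $ k))\<^sup>2 / (2 * \<sigma>\<^sup>2))))"

definition Hz :: "real \<Rightarrow> real^'n::finite^'q::finite \<Rightarrow> real" where
  "Hz \<mu> z = - ln (1 / real CARD('q) * (\<Sum>k\<in>UNIV. exp (- \<mu> / 2 * (norm (z $ k))\<^sup>2)))"

lemma gd_cont[continuous_intros]: "continuous_on S f \<Longrightarrow> continuous_on S (\<lambda>x. gd \<sigma> (f x))"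
  unfolding gd_def divide_inverse by (intro continuous_intros)

lemma sum_exp_pos: "0 < (\<Sum>k\<in>(UNIV::'q::finite set). exp (f k :: real))"
  by (intro sum_pos) auto

lemma sum_exp_nz[simp]: "(\<Sum>k\<in>(UNIV::'q::finite set). exp (f k :: real)) \<noteq> 0"
  using sum_exp_pos[of f] by linarith

lemma Hx_cont[continuous_intros]: "continuous_on S f \<Longrightarrow> continuous_on S g \<Longrightarrow> continuous_on S (\<lambda>p. Hx \<sigma> (f p) (g p))"
  unfolding Hx_def divide_inverse[of _ "2 * \<sigma>\<^sup>2"] by (intro continuous_intros) auto

lemma Hz_cont[continuous_intros]: "continuous_on S f \<Longrightarrow> continuous_on S (\<lambda>p. Hz \<mu> (f p))"
  unfolding Hz_def by (intro continuous_intros) auto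

lemma gd_meas[measurable]: "gd \<sigma> \<in> borel_measurable borel"
  by (intro borel_measurable_continuous_onI continuous_intros)

lemma Hz_meas[measurable]: "Hz \<mu> \<in> borel_measurable borel"
  by (intro borel_measurable_continuous_onI continuous_intros)

lemma F_meas: "(\<lambda>(x::real^'n::finite, w::real^'n^'q::finite). ennreal (gd s w * gd \<sigma> (x - w$j) * Hx \<sigma> x w)) \<in> borel_measurable (lborel \<Otimes>\<^sub>M lborel)"
  unfolding lborel_prod case_prod_unfold
  apply (rule measurable_compose[OF _ measurable_ennreal])
  apply (simp only: measurable_lborel2)
  apply (rule borel_measurable_continuous_onI)
  apply (intro continuous_intros)
  done



lemma sq_identity:
  fixes x :: "real^'n::finite" and z :: "real^'n^'q::finite"
  shows "(\<Sum>a\<in>UNIV. (norm (x - s *\<^sub>R z$a))\<^sup>2) =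
     real CARD('q) * (norm (x - (s / real CARD('q)) *\<^sub>R (\<Sum>a\<in>UNIV. z$a)))\<^sup>2
     + s\<^sup>2 * ((\<Sum>a\<in>UNIV. (norm (z$a))\<^sup>2) - (norm (\<Sum>a\<in>UNIV. z$a))\<^sup>2 / real CARD('q))"
proof -
  define S where "S = (\<Sum>a\<in>UNIV. z$a)"
  define q where "q = real CARD('q)"
  have q0: "q > 0" unfolding q_def by simp
  have "(\<Sum>a\<in>UNIV. (norm (x - s *\<^sub>R z$a))\<^sup>2) = (\<Sum>a\<in>UNIV. x \<bullet> x - 2 * s * (x \<bullet> z$a) + s\<^sup>2 * (z$a \<bullet> z$a))"
    by (intro sum.cong refl) (simp add: power2_norm_eq_inner inner_diff_left inner_diff_right inner_commute algebra_simps power2_eq_square[of s])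
  also have "\<dots> = q * (x \<bullet> x) - 2 * s * (x \<bullet> S) + s\<^sup>2 * (\<Sum>a\<in>UNIV. (norm (z$a))\<^sup>2)"
    by (simp add: sum.distrib sum_subtractf sum_distrib_left[symmetric] inner_sum_right S_def q_def power2_norm_eq_inner)
  also have "\<dots> = q * (norm (x - (s / q) *\<^sub>R S))\<^sup>2 + s\<^sup>2 * ((\<Sum>a\<in>UNIV. (norm (z$a))\<^sup>2) - (norm S)\<^sup>2 / q)"
  proof -
    have e: "(norm (x - (s / q) *\<^sub>R S))\<^sup>2 = x \<bullet> x - 2 * (s / q) * (x \<bullet> S) + (s / q)\<^sup>2 * (S \<bullet> S)"
      by (simp add: power2_norm_eq_inner inner_diff_left inner_diff_right inner_commute algebra_simps power2_eq_square[of "s/q"])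
    have e2: "(norm S)\<^sup>2 = S \<bullet> S" by (simp add: power2_norm_eq_inner)
    show ?thesis unfolding e e2 using q0 by (simp add: field_simps power2_eq_square)
  qed
  finally show ?thesis unfolding S_def q_def .
qed



definition Ez :: "real^'n::finite^'q::finite \<Rightarrow> real" where
  "Ez z = (\<Sum>a\<in>UNIV. (norm (z$a))\<^sup>2) - (norm (\<Sum>a\<in>UNIV. z$a))\<^sup>2 / real CARD('q)"

lemma gd_shift:
  fixes x :: "real^'n::finite" and z :: "real^'n^'q::finite"
  assumes s: "s > 0"
  shows "gd s ((\<chi> a. x) - s *\<^sub>R z) =
    (2 * pi * s\<^sup>2) powr (- real (CARD('q) * CARD('n)) / 2) * (2 * pi * s\<^sup>2 / real CARD('q)) powr (real CARD('n) / 2)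
    * exp (- 1 / 2 * Ez z) * gd (s / sqrt (real CARD('q))) (x - (s / real CARD('q)) *\<^sub>R (\<Sum>a\<in>UNIV. z$a))"
proof -
  define q where "q = real CARD('q)"
  define n where "n = real CARD('n)"
  define y where "y = x - (s / q) *\<^sub>R (\<Sum>a\<in>UNIV. z$a)"
  have q0: "q > 0" unfolding q_def by simp
  have N: "(norm ((\<chi> a. x) - s *\<^sub>R z))\<^sup>2 = q * (norm y)\<^sup>2 + s\<^sup>2 * Ez z"
    unfolding norm_sq_vec[of "(\<chi> a. x) - s *\<^sub>R z"] y_def q_def Ez_def
    by (simp add: sq_identity)
  have sq: "(s / sqrt q)\<^sup>2 = s\<^sup>2 / q" using q0 by (simp add: power_divide)
  have L: "gd s ((\<chi> a. x) - s *\<^sub>R z) = (2 * pi * s\<^sup>2) powr (- (q * n) / 2) * exp (- (q * (norm y)\<^sup>2 + s\<^sup>2 * Ez z) / (2 * s\<^sup>2))"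
    unfolding gd_def N by (simp add: q_def n_def)
  have R: "gd (s / sqrt q) y = (2 * pi * s\<^sup>2 / q) powr (- n / 2) * exp (- (norm y)\<^sup>2 / (2 * (s\<^sup>2 / q)))"
    unfolding gd_def sq by (simp add: n_def)
  have P: "(2 * pi * s\<^sup>2 / q) powr (n / 2) * (2 * pi * s\<^sup>2 / q) powr (- n / 2) = 1"
    using q0 s by (simp add: powr_add[symmetric])
  have X: "exp (- (q * (norm y)\<^sup>2 + s\<^sup>2 * Ez z) / (2 * s\<^sup>2)) = exp (- 1 / 2 * Ez z) * exp (- (norm y)\<^sup>2 / (2 * (s\<^sup>2 / q)))"
    using q0 s by (simp add: exp_add[symmetric] field_simps)
  show ?thesis
    unfolding of_nat_mult q_def[symmetric] n_def[symmetric] y_def[symmetric] L R X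
    using P by (simp add: ac_simps)
qed



lemma const_identity:
  assumes s: "s > 0" and \<sigma>: "\<sigma> > 0" and \<mu>: "\<mu> = s\<^sup>2 / \<sigma>\<^sup>2" and q: "q > 0"
  shows "s ^ (Q * N) * (2 * pi * s\<^sup>2) powr (- real (Q * N) / 2) * (2 * pi * s\<^sup>2 / q) powr (real N / 2)
         * (2 * pi * \<sigma>\<^sup>2) powr (- real N / 2)
       = (\<mu> / q) powr (real N / 2) * (2 * pi) powr (- (real Q * real N) / 2)"
proof -
  have a: "s ^ (Q * N) = (s\<^sup>2) powr (real (Q * N) / 2)"
  proof -
    have "(s\<^sup>2) powr (real (Q * N) / 2) = (s powr 2) powr (real (Q * N) / 2)"
      using s by (simp add: powr_numeral)
    also have "\<dots> = s powr (real (Q * N))" by (simp add: powr_powr)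
    also have "\<dots> = s ^ (Q * N)" using s by (simp only: powr_realpow)
    finally show ?thesis ..
  qed
  have b: "(2 * pi * s\<^sup>2) powr (- real (Q * N) / 2) = (2 * pi) powr (- real (Q * N) / 2) * (s\<^sup>2) powr (- real (Q * N) / 2)"
    using s by (simp add: powr_mult)
  have c: "(2 * pi * s\<^sup>2 / q) powr (real N / 2) * (2 * pi * \<sigma>\<^sup>2) powr (- real N / 2) = (\<mu> / q) powr (real N / 2)"
  proof -
    have "(2 * pi * s\<^sup>2 / q) powr (real N / 2) * (2 * pi * \<sigma>\<^sup>2) powr (- real N / 2)
        = ((2 * pi * s\<^sup>2 / q) / (2 * pi * \<sigma>\<^sup>2)) powr (real N / 2)"
      using s \<sigma> q by (subst powr_divide) (auto simp: powr_minus_divide)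
    also have "(2 * pi * s\<^sup>2 / q) / (2 * pi * \<sigma>\<^sup>2) = \<mu> / q" using \<sigma> q \<mu> by (simp add: field_simps)
    finally show ?thesis .
  qed
  have d: "(s\<^sup>2) powr (real (Q * N) / 2) * (s\<^sup>2) powr (- real (Q * N) / 2) = 1"
    using s by (simp add: powr_add[symmetric])
  have "s ^ (Q * N) * (2 * pi * s\<^sup>2) powr (- real (Q * N) / 2) * (2 * pi * s\<^sup>2 / q) powr (real N / 2)
         * (2 * pi * \<sigma>\<^sup>2) powr (- real N / 2)
     = (2 * pi) powr (- real (Q * N) / 2) * ((s\<^sup>2) powr (real (Q * N) / 2) * (s\<^sup>2) powr (- real (Q * N) / 2))
       * ((2 * pi * s\<^sup>2 / q) powr (real N / 2) * (2 * pi * \<sigma>\<^sup>2) powr (- real N / 2))"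
    unfolding a b by (simp only: mult_ac)
  also have "\<dots> = (\<mu> / q) powr (real N / 2) * (2 * pi) powr (- (real Q * real N) / 2)"
    unfolding c d by simp
  finally show ?thesis .
qed



definition Wj :: "real \<Rightarrow> 'q::finite \<Rightarrow> real^'n::finite^'q \<Rightarrow> real" where
  "Wj \<mu> j z = exp (- 1/2 * (\<Sum>a\<in>UNIV. (norm (z $ a))\<^sup>2)
                  + 1 / (2 * real CARD('q)) * (norm (\<Sum>a\<in>UNIV. z $ a))\<^sup>2
                  - \<mu> / 2 * (norm (z $ j))\<^sup>2)"

lemma cont_meas1: "continuous_on UNIV f \<Longrightarrow> (\<lambda>x. ennreal (f x :: real)) \<in> borel_measurable borel"
  by (rule measurable_compose[OF _ measurable_ennreal]) (rule borel_measurable_continuous_onI)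

lemma cont_meas2:
  "continuous_on UNIV (\<lambda>p. f (fst p) (snd p) :: real) \<Longrightarrow>
   (\<lambda>(x::'a::euclidean_space, y::'b::euclidean_space). ennreal (f x y)) \<in> borel_measurable (lborel \<Otimes>\<^sub>M lborel)"
  unfolding lborel_prod case_prod_unfold
  apply (rule measurable_compose[OF _ measurable_ennreal])
  apply (simp only: measurable_lborel2)
  apply (rule borel_measurable_continuous_onI)
  apply assumption
  done

lemma Hz_nonneg: "0 \<le> \<mu> \<Longrightarrow> 0 \<le> Hz \<mu> z"
proof -
  assume m: "0 \<le> \<mu>"
  have "(\<Sum>k\<in>UNIV. exp (- \<mu> / 2 * (norm (z $ k))\<^sup>2)) \<le> (\<Sum>k\<in>(UNIV::'b set). 1)"
    using m by (intro sum_mono) (auto simp: mult_nonneg_nonneg)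
  then have "1 / real CARD('b) * (\<Sum>k\<in>UNIV. exp (- \<mu> / 2 * (norm (z $ k))\<^sup>2)) \<le> 1"
    by (simp add: field_simps)
  moreover have "0 < 1 / real CARD('b) * (\<Sum>k\<in>UNIV. exp (- \<mu> / 2 * (norm (z $ k))\<^sup>2))"
    by (intro mult_pos_pos sum_pos) auto
  ultimately show ?thesis unfolding Hz_def by simp
qed

lemma Hx_nonneg: "0 \<le> Hx \<sigma> x w"
proof -
  have "(\<Sum>k\<in>UNIV. exp (- (norm (x - w $ k))\<^sup>2 / (2 * \<sigma>\<^sup>2))) \<le> (\<Sum>k\<in>(UNIV::'b set). 1)"
    by (intro sum_mono) (auto simp: divide_nonneg_nonneg)
  then have "1 / real CARD('b) * (\<Sum>k\<in>UNIV. exp (- (norm (x - w $ k))\<^sup>2 / (2 * \<sigma>\<^sup>2))) \<le> 1"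
    by (simp add: field_simps)
  moreover have "0 < 1 / real CARD('b) * (\<Sum>k\<in>UNIV. exp (- (norm (x - w $ k))\<^sup>2 / (2 * \<sigma>\<^sup>2)))"
    by (intro mult_pos_pos sum_pos) auto
  ultimately show ?thesis unfolding Hx_def by simp
qed



lemma main_T:
  fixes j :: "'q::finite"
  assumes s: "s > 0" and \<sigma>: "\<sigma> > 0" and \<mu>: "\<mu> = s\<^sup>2 / \<sigma>\<^sup>2"
  shows "(\<integral>\<^sup>+w. \<integral>\<^sup>+x. ennreal (gd s (w::real^'n::finite^'q) * gd \<sigma> (x - w$j) * Hx \<sigma> x w) \<partial>lborel \<partial>lborel)
       = ennreal ((\<mu> / real CARD('q)) powr (real CARD('n) / 2) * (2 * pi) powr (- (real CARD('q) * real CARD('n)) / 2))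
         * (\<integral>\<^sup>+z. ennreal (Wj \<mu> j (z::real^'n^'q) * Hz \<mu> z) \<partial>lborel)"
proof -
  define K where "K = (\<mu> / real CARD('q)) powr (real CARD('n) / 2) * (2 * pi) powr (- (real CARD('q) * real CARD('n)) / 2)"
  define X where "X = (\<lambda>x::real^'n. (\<chi> a::'q. x))"
  define G where "G = (\<lambda>x z. gd s (X x - s *\<^sub>R z) * gd \<sigma> (s *\<^sub>R z$j) * Hz \<mu> z)"
  define c where "c = s ^ (CARD('q) * CARD('n))"
  have \<mu>0: "0 \<le> \<mu>" using \<mu> by simp
  have c0: "0 \<le> c" using s unfolding c_def by simp
  have K0: "0 \<le> K" unfolding K_def by simp
  have G0: "0 \<le> G x z" for x z unfolding G_def by (intro mult_nonneg_nonneg gd_nonneg Hz_nonneg \<mu>0)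
  have contX: "continuous_on S (\<lambda>p. X (f p))" if "continuous_on S f" for S and f :: "'b::topological_space \<Rightarrow> real^'n"
    unfolding X_def by (intro continuous_intros that)
  have step1: "(\<integral>\<^sup>+w. \<integral>\<^sup>+x. ennreal (gd s (w::real^'n::finite^'q) * gd \<sigma> (x - w$j) * Hx \<sigma> x w) \<partial>lborel \<partial>lborel)
      = (\<integral>\<^sup>+x. \<integral>\<^sup>+w. ennreal (gd s (w::real^'n::finite^'q) * gd \<sigma> (x - w$j) * Hx \<sigma> x w) \<partial>lborel \<partial>lborel)"
    by (rule lborel_pair.Fubini'[OF F_meas])
  have step2: "(\<integral>\<^sup>+w. ennreal (gd s (w::real^'n::finite^'q) * gd \<sigma> (x - w$j) * Hx \<sigma> x w) \<partial>lborel)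
      = (\<integral>\<^sup>+z. ennreal (c * G x z) \<partial>lborel)" for x
  proof -
    let ?f = "\<lambda>w::real^'n^'q. ennreal (gd s w * gd \<sigma> (x - w$j) * Hx \<sigma> x w)"
    let ?T = "\<lambda>z::real^'n^'q. X x + (- s) *\<^sub>R z"
    have fm: "?f \<in> borel_measurable borel"
      by (intro cont_meas1 continuous_intros)
    have Tm: "?T \<in> borel_measurable borel"
      by (intro borel_measurable_continuous_onI continuous_intros)
    have eq: "lborel = density (distr lborel borel ?T) (\<lambda>_. \<bar>- s\<bar> ^ DIM(real^'n^'q))"
      by (rule lborel_affine) (use s in simp)
    have "(\<integral>\<^sup>+w. ?f w \<partial>lborel) = (\<integral>\<^sup>+w. ?f w \<partial>density (distr lborel borel ?T) (\<lambda>_. \<bar>- s\<bar> ^ DIM(real^'n^'q)))"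
      by (rule arg_cong[where f="\<lambda>M. \<integral>\<^sup>+w. ?f w \<partial>M", OF eq])
    also have "\<dots> = (\<integral>\<^sup>+z. ennreal (\<bar>- s\<bar> ^ DIM(real^'n^'q)) * ?f (?T z) \<partial>lborel)"
      using fm Tm by (simp add: nn_integral_density nn_integral_distr)
    also have "\<dots> = (\<integral>\<^sup>+z. ennreal (c * G x z) \<partial>lborel)"
    proof (rule nn_integral_cong)
      fix z :: "real^'n^'q"
      have e1: "x - (X x - s *\<^sub>R z) $ j = s *\<^sub>R z $ j" unfolding X_def by simp
      have e2: "Hx \<sigma> x (X x - s *\<^sub>R z) = Hz \<mu> z"
        unfolding Hx_def Hz_def X_def using \<sigma>
        by (simp add: \<mu> power_mult_distrib field_simps)
      have e3: "?T z = X x - s *\<^sub>R z" by simp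
      show "ennreal (\<bar>- s\<bar> ^ DIM(real^'n^'q)) * ?f (?T z) = ennreal (c * G x z)"
        unfolding e3 e1 e2 G_def c_def using s
        by (simp add: ennreal_mult'[symmetric] mult.commute)
    qed
    finally show ?thesis .
  qed
  have step3: "(\<integral>\<^sup>+x. \<integral>\<^sup>+z. ennreal (c * G x z) \<partial>lborel \<partial>lborel)
      = (\<integral>\<^sup>+z. \<integral>\<^sup>+x. ennreal (c * G x z) \<partial>lborel \<partial>lborel)"
    by (rule lborel_pair.Fubini'[symmetric], rule cont_meas2)
       (unfold G_def, intro continuous_intros contX)
  have step4: "(\<integral>\<^sup>+x. ennreal (c * G x z) \<partial>lborel) = ennreal (K * (Wj \<mu> j z * Hz \<mu> z))" for z
  proof -
    define C1 where "C1 = (2 * pi * s\<^sup>2) powr (- real (CARD('q) * CARD('n)) / 2) * (2 * pi * s\<^sup>2 / real CARD('q)) powr (real CARD('n) / 2)"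
    define m where "m = (s / real CARD('q)) *\<^sub>R (\<Sum>a\<in>UNIV. z$a)"
    define s' where "s' = s / sqrt (real CARD('q))"
    define A where "A = c * C1 * exp (- 1 / 2 * Ez z) * gd \<sigma> (s *\<^sub>R z$j) * Hz \<mu> z"
    have s'0: "s' > 0" unfolding s'_def using s by simp
    have A0: "0 \<le> A" unfolding A_def C1_def using c0 Hz_nonneg[OF \<mu>0, of z]
      by (intro mult_nonneg_nonneg gd_nonneg) auto
    have Gx: "c * G x z = A * gd s' (x - m)" for x
      unfolding G_def X_def gd_shift[OF s] A_def C1_def m_def s'_def by (simp add: ac_simps)
    have "(\<integral>\<^sup>+x. ennreal (c * G x z) \<partial>lborel) = (\<integral>\<^sup>+x. ennreal A * ennreal (gd s' (x - m)) \<partial>lborel)"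
      unfolding Gx using A0 by (intro nn_integral_cong) (simp add: ennreal_mult gd_nonneg)
    also have "\<dots> = ennreal A"
      by (simp add: nn_integral_cmult gd_int[OF s'0])
    also have "A = K * (Wj \<mu> j z * Hz \<mu> z)"
    proof -
      have g: "gd \<sigma> (s *\<^sub>R z$j) = (2 * pi * \<sigma>\<^sup>2) powr (- real CARD('n) / 2) * exp (- \<mu> / 2 * (norm (z$j))\<^sup>2)"
        unfolding gd_def using \<sigma> by (simp add: \<mu> power_mult_distrib field_simps)
      have w: "Wj \<mu> j z = exp (- 1 / 2 * Ez z) * exp (- \<mu> / 2 * (norm (z$j))\<^sup>2)"
        unfolding Wj_def Ez_def by (simp add: exp_add[symmetric] field_simps)
      have k: "c * C1 * (2 * pi * \<sigma>\<^sup>2) powr (- real CARD('n) / 2) = K"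
        unfolding c_def C1_def K_def
        using const_identity[OF s \<sigma> \<mu>, of "real CARD('q)" "CARD('q)" "CARD('n)"] by (simp add: mult.assoc)
      show ?thesis unfolding A_def g w k[symmetric] by (simp add: ac_simps)
    qed
    finally show ?thesis .
  qed
  have step5: "(\<integral>\<^sup>+z. ennreal (K * (Wj \<mu> j (z::real^'n^'q) * Hz \<mu> z)) \<partial>lborel) = ennreal K * (\<integral>\<^sup>+z. ennreal (Wj \<mu> j (z::real^'n^'q) * Hz \<mu> z) \<partial>lborel)"
  proof -
    have m: "(\<lambda>z. ennreal (Wj \<mu> j z * Hz \<mu> (z::real^'n^'q))) \<in> borel_measurable lborel"
      unfolding measurable_lborel2 Wj_def by (intro cont_meas1 continuous_intros)
    have "(\<integral>\<^sup>+z. ennreal (K * (Wj \<mu> j (z::real^'n^'q) * Hz \<mu> z)) \<partial>lborel) = (\<integral>\<^sup>+z. ennreal K * ennreal (Wj \<mu> j (z::real^'n^'q) * Hz \<mu> z) \<partial>lborel)"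
      by (intro nn_integral_cong) (simp add: ennreal_mult K0 Wj_def Hz_nonneg \<mu>0)
    also have "\<dots> = ennreal K * (\<integral>\<^sup>+z. ennreal (Wj \<mu> j (z::real^'n^'q) * Hz \<mu> z) \<partial>lborel)"
      by (rule nn_integral_cmult[OF m])
    finally show ?thesis .
  qed
  have "(\<integral>\<^sup>+w. \<integral>\<^sup>+x. ennreal (gd s (w::real^'n::finite^'q) * gd \<sigma> (x - w$j) * Hx \<sigma> x w) \<partial>lborel \<partial>lborel)
      = (\<integral>\<^sup>+x. \<integral>\<^sup>+z. ennreal (c * G x z) \<partial>lborel \<partial>lborel)"
    unfolding step1 step2 ..
  also have "\<dots> = (\<integral>\<^sup>+z. \<integral>\<^sup>+x. ennreal (c * G x z) \<partial>lborel \<partial>lborel)" by (rule step3)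
  also have "\<dots> = (\<integral>\<^sup>+z. ennreal (K * (Wj \<mu> j (z::real^'n^'q) * Hz \<mu> z)) \<partial>lborel)"
    by (simp only: step4)
  also have "\<dots> = ennreal K * (\<integral>\<^sup>+z. ennreal (Wj \<mu> j (z::real^'n^'q) * Hz \<mu> z) \<partial>lborel)"
    by (rule step5)
  finally show ?thesis unfolding K_def .
qed



lemma gd_sq_bound:
  assumes \<sigma>: "\<sigma> > 0"
  shows "gd \<sigma> (y::'a::euclidean_space) * ((norm y)\<^sup>2 / (2 * \<sigma>\<^sup>2)) \<le> 2 * 2 powr (real DIM('a) / 2) * gd (sqrt 2 * \<sigma>) y"
proof -
  define u where "u = (norm y)\<^sup>2 / (4 * \<sigma>\<^sup>2)"
  have u0: "0 \<le> u" unfolding u_def by simp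
  have a: "(norm y)\<^sup>2 / (2 * \<sigma>\<^sup>2) = 2 * u" unfolding u_def using \<sigma> by (simp add: field_simps)
  have b: "u \<le> exp u" using exp_ge_add_one_self[of u] by linarith
  have c: "gd \<sigma> y * exp u = 2 powr (real DIM('a) / 2) * gd (sqrt 2 * \<sigma>) y"
  proof -
    have e: "exp (- (norm y)\<^sup>2 / (2 * \<sigma>\<^sup>2)) * exp u = exp (- (norm y)\<^sup>2 / (2 * (sqrt 2 * \<sigma>)\<^sup>2))"
      unfolding u_def using \<sigma> by (simp add: exp_add[symmetric] power_mult_distrib field_simps)
    have p: "(2 * pi * \<sigma>\<^sup>2) powr (- real DIM('a) / 2) = 2 powr (real DIM('a) / 2) * (2 * pi * (sqrt 2 * \<sigma>)\<^sup>2) powr (- real DIM('a) / 2)"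
    proof -
      have "(2 * pi * (sqrt 2 * \<sigma>)\<^sup>2) = 2 * (2 * pi * \<sigma>\<^sup>2)" by (simp add: power_mult_distrib)
      moreover have "(2 * (2 * pi * \<sigma>\<^sup>2)) powr (- real DIM('a) / 2) = 2 powr (- real DIM('a) / 2) * (2 * pi * \<sigma>\<^sup>2) powr (- real DIM('a) / 2)"
        by (rule powr_mult)
      ultimately have "(2 * pi * (sqrt 2 * \<sigma>)\<^sup>2) powr (- real DIM('a) / 2) = 2 powr (- real DIM('a) / 2) * (2 * pi * \<sigma>\<^sup>2) powr (- real DIM('a) / 2)"
        by simp
      moreover have "2 powr (real DIM('a) / 2) * 2 powr (- real DIM('a) / 2) = (1::real)"
        by (simp add: powr_add[symmetric])
      ultimately show ?thesis by (simp add: mult.assoc[symmetric])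
    qed
    show ?thesis unfolding gd_def p using e[symmetric] by (simp add: ac_simps)
  qed
  have "gd \<sigma> y * ((norm y)\<^sup>2 / (2 * \<sigma>\<^sup>2)) = 2 * (gd \<sigma> y * u)" unfolding a by simp
  also have "\<dots> \<le> 2 * (gd \<sigma> y * exp u)" using b gd_nonneg[of \<sigma> y] by (simp add: mult_left_mono)
  also have "\<dots> = 2 * 2 powr (real DIM('a) / 2) * gd (sqrt 2 * \<sigma>) y" unfolding c by simp
  finally show ?thesis .
qed

lemma Hx_bound:
  "Hx \<sigma> x w \<le> ln (real CARD('q)) + (norm (x - (w::real^'n::finite^'q::finite) $ j))\<^sup>2 / (2 * \<sigma>\<^sup>2)"
proof -
  let ?S = "\<Sum>k\<in>UNIV. exp (- (norm (x - w $ k))\<^sup>2 / (2 * \<sigma>\<^sup>2))"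
  have "exp (- (norm (x - w $ j))\<^sup>2 / (2 * \<sigma>\<^sup>2)) \<le> ?S"
    by (rule member_le_sum) auto
  have "ln (1 / real CARD('q) * exp (- (norm (x - w $ j))\<^sup>2 / (2 * \<sigma>\<^sup>2))) \<le> ln (1 / real CARD('q) * ?S)"
  proof -
    have S0: "0 < ?S" by (intro sum_pos) auto
    show ?thesis using \<open>exp _ \<le> ?S\<close> S0
      by (subst ln_le_cancel_iff) (auto intro: divide_right_mono)
  qed
  moreover have "ln (1 / real CARD('q) * exp (- (norm (x - w $ j))\<^sup>2 / (2 * \<sigma>\<^sup>2))) = - ln (real CARD('q)) - (norm (x - w $ j))\<^sup>2 / (2 * \<sigma>\<^sup>2)"
    by (simp add: ln_mult ln_div)
  ultimately show ?thesis unfolding Hx_def by linarith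
qed

lemma gd_shift_meas: "(\<lambda>x. ennreal (gd \<sigma> (x - c :: 'a::euclidean_space))) \<in> borel_measurable lborel"
  unfolding measurable_lborel2 by (intro cont_meas1 continuous_intros)

lemma gd_int_c:
  assumes "\<sigma> > 0" and that: "0 \<le> a"
  shows "(\<integral>\<^sup>+x. ennreal (a * gd \<sigma> ((x::'a::euclidean_space) - c)) \<partial>lborel) = ennreal a"
proof -
  have "(\<integral>\<^sup>+x. ennreal (a * gd \<sigma> ((x::'a::euclidean_space) - c)) \<partial>lborel) = (\<integral>\<^sup>+x. ennreal a * ennreal (gd \<sigma> ((x::'a::euclidean_space) - c)) \<partial>lborel)"
    using that by (intro nn_integral_cong) (simp add: ennreal_mult gd_nonneg)
  also have "\<dots> = ennreal a" by (simp add: nn_integral_cmult[OF gd_shift_meas] gd_int[OF assms(1)])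
  finally show ?thesis .
qed

lemma Aplus_bound:
  assumes \<sigma>: "\<sigma> > 0"
  shows "(\<integral>\<^sup>+x. ennreal (mix_density \<sigma> x (w::real^'n::finite^'q::finite) * Hx \<sigma> x w) \<partial>lborel)
     \<le> ennreal (ln (real CARD('q)) + 2 * 2 powr (real CARD('n) / 2))"
proof -
  define C where "C = 2 * 2 powr (real CARD('n) / 2)"
  define q where "q = real CARD('q)"
  have q1: "1 \<le> q" unfolding q_def by simp
  have lnq: "0 \<le> ln q" using q1 by simp
  have C0: "0 \<le> C" unfolding C_def by simp
  define g1 where "g1 = (\<lambda>j x. (1 / q * ln q) * gd \<sigma> (x - w$j))"
  define g2 where "g2 = (\<lambda>j x. (1 / q * C) * gd (sqrt 2 * \<sigma>) (x - w$j))"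
  have g10: "0 \<le> g1 j x" for j x unfolding g1_def using lnq q1 by (simp add: gd_nonneg)
  have g20: "0 \<le> g2 j x" for j x unfolding g2_def using C0 q1 by (simp add: gd_nonneg)
  have pt: "mix_density \<sigma> x w * Hx \<sigma> x w \<le> (\<Sum>j\<in>UNIV. g1 j x + g2 j x)" for x
  proof -
    have "mix_density \<sigma> x w * Hx \<sigma> x w = (\<Sum>j\<in>UNIV. 1 / q * (gd \<sigma> (x - w$j) * Hx \<sigma> x w))"
      unfolding mix_gd q_def by (simp add: sum_distrib_left sum_distrib_right mult.assoc)
    also have "\<dots> \<le> (\<Sum>j\<in>UNIV. g1 j x + g2 j x)"
    proof (rule sum_mono)
      fix j
      have "gd \<sigma> (x - w$j) * Hx \<sigma> x w \<le> gd \<sigma> (x - w$j) * (ln q + (norm (x - w $ j))\<^sup>2 / (2 * \<sigma>\<^sup>2))"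
        using Hx_bound[of \<sigma> x w j] unfolding q_def by (intro mult_left_mono gd_nonneg) auto
      also have "\<dots> = ln q * gd \<sigma> (x - w$j) + gd \<sigma> (x - w$j) * ((norm (x - w $ j))\<^sup>2 / (2 * \<sigma>\<^sup>2))"
        by (simp add: algebra_simps)
      also have "\<dots> \<le> ln q * gd \<sigma> (x - w$j) + C * gd (sqrt 2 * \<sigma>) (x - w$j)"
        using gd_sq_bound[OF \<sigma>, of "x - w$j"] unfolding C_def by simp
      finally have "gd \<sigma> (x - w$j) * Hx \<sigma> x w \<le> ln q * gd \<sigma> (x - w$j) + C * gd (sqrt 2 * \<sigma>) (x - w$j)" .
      then have "1 / q * (gd \<sigma> (x - w$j) * Hx \<sigma> x w) \<le> 1 / q * (ln q * gd \<sigma> (x - w$j) + C * gd (sqrt 2 * \<sigma>) (x - w$j))"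
        using q1 by (intro mult_left_mono) auto
      also have "\<dots> = g1 j x + g2 j x" unfolding g1_def g2_def by (simp add: algebra_simps)
      finally show "1 / q * (gd \<sigma> (x - w$j) * Hx \<sigma> x w) \<le> g1 j x + g2 j x" .
    qed
    finally show ?thesis .
  qed
  have m1: "(\<lambda>x. ennreal (g1 j x)) \<in> borel_measurable lborel" for j
    unfolding g1_def measurable_lborel2 by (intro cont_meas1 continuous_intros)
  have m2: "(\<lambda>x. ennreal (g2 j x)) \<in> borel_measurable lborel" for j
    unfolding g2_def measurable_lborel2 by (intro cont_meas1 continuous_intros)
  have "(\<integral>\<^sup>+x. ennreal (mix_density \<sigma> x w * Hx \<sigma> x w) \<partial>lborel) \<le> (\<integral>\<^sup>+x. ennreal (\<Sum>j\<in>UNIV. g1 j x + g2 j x) \<partial>lborel)"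
    by (intro nn_integral_mono ennreal_leI pt)
  also have "\<dots> = (\<integral>\<^sup>+x. (\<Sum>j\<in>UNIV. ennreal (g1 j x) + ennreal (g2 j x)) \<partial>lborel)"
  proof (rule nn_integral_cong)
    fix x
    have "ennreal (\<Sum>j\<in>UNIV. g1 j x + g2 j x) = (\<Sum>j\<in>UNIV. ennreal (g1 j x + g2 j x))"
      by (rule sum_ennreal[symmetric]) (intro add_nonneg_nonneg g10 g20)
    also have "\<dots> = (\<Sum>j\<in>UNIV. ennreal (g1 j x) + ennreal (g2 j x))"
      by (intro sum.cong refl ennreal_plus g10 g20)
    finally show "ennreal (\<Sum>j\<in>UNIV. g1 j x + g2 j x) = (\<Sum>j\<in>UNIV. ennreal (g1 j x) + ennreal (g2 j x))" .
  qed
  also have "\<dots> = (\<Sum>j\<in>UNIV. (\<integral>\<^sup>+x. ennreal (g1 j x) \<partial>lborel) + (\<integral>\<^sup>+x. ennreal (g2 j x) \<partial>lborel))"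
    apply (subst nn_integral_sum)
     apply (rule borel_measurable_add[OF m1 m2])
    apply (intro sum.cong refl nn_integral_add m1 m2)
    done
  also have "\<dots> = (\<Sum>j\<in>(UNIV::'q set). ennreal (1 / q * ln q) + ennreal (1 / q * C))"
    unfolding g1_def g2_def using lnq C0 q1 \<sigma>
    by (intro sum.cong refl arg_cong2[where f="(+)"] gd_int_c) auto
  also have "\<dots> = ennreal (ln q + C)"
  proof -
    have "(\<Sum>j\<in>(UNIV::'q set). ennreal (1 / q * ln q) + ennreal (1 / q * C)) = (\<Sum>j\<in>(UNIV::'q set). ennreal (1 / q * ln q + 1 / q * C))"
      using lnq C0 q1 by (intro sum.cong refl ennreal_plus[symmetric]) auto
    also have "\<dots> = ennreal (q * (1 / q * ln q + 1 / q * C))"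
      using lnq C0 q1 by (subst sum_ennreal) (auto simp: q_def)
    also have "q * (1 / q * ln q + 1 / q * C) = ln q + C" using q1 by (simp add: field_simps)
    finally show ?thesis .
  qed
  finally show ?thesis unfolding q_def C_def .
qed



lemma integrable_nn:
  fixes f :: "'a \<Rightarrow> real"
  assumes m: "f \<in> borel_measurable M" and nn: "\<And>x. 0 \<le> f x" and fin: "(\<integral>\<^sup>+x. ennreal (f x) \<partial>M) < \<infinity>"
  shows "integrable M f" and "integral\<^sup>L M f = enn2real (\<integral>\<^sup>+x. ennreal (f x) \<partial>M)"
proof -
  have fin': "(\<integral>\<^sup>+x. ennreal (f x) \<partial>M) < top" using fin by simp
  show "integrable M f"
    by (rule integrableI_nn_integral_finite[OF m _ ennreal_enn2real[OF fin', symmetric]]) (simp add: nn)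
  show "integral\<^sup>L M f = enn2real (\<integral>\<^sup>+x. ennreal (f x) \<partial>M)"
    by (rule integral_eq_nn_integral[OF m]) (simp add: nn)
qed

lemma mix_cont: "continuous_on UNIV (\<lambda>x. mix_density \<sigma> x w)"
  unfolding mix_gd by (intro continuous_intros)

lemma mix_meas: "(\<lambda>x. mix_density \<sigma> x w) \<in> borel_measurable lborel"
  unfolding measurable_lborel2 by (rule borel_measurable_continuous_onI[OF mix_cont])

lemma mixH_meas: "(\<lambda>x. mix_density \<sigma> x w * Hx \<sigma> x w) \<in> borel_measurable lborel"
  unfolding measurable_lborel2 mix_gd by (intro borel_measurable_continuous_onI continuous_intros)

lemma mix_nonneg: "0 \<le> mix_density \<sigma> x w"
  unfolding mix_gd by (intro mult_nonneg_nonneg sum_nonneg gd_nonneg) auto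

lemma mix_ln:
  assumes \<sigma>: "\<sigma> > 0"
  shows "ln (mix_density \<sigma> x (w::real^'n::finite^'q::finite)) = - (real CARD('n) / 2) * ln (2 * pi * \<sigma>\<^sup>2) - Hx \<sigma> x w"
proof -
  let ?S = "1 / real CARD('q) * (\<Sum>j\<in>UNIV. exp (- (norm (x - (w $ j)))\<^sup>2 / (2 * \<sigma>\<^sup>2)))"
  have S0: "0 < ?S" by (intro mult_pos_pos sum_pos) auto
  have P0: "0 < (2 * pi * \<sigma>\<^sup>2) powr (- real CARD('n) / 2)" using \<sigma> by simp
  have e: "mix_density \<sigma> x w = (2 * pi * \<sigma>\<^sup>2) powr (- real CARD('n) / 2) * ?S"
    unfolding mix_density_def by (simp only: mult.assoc)
  have "ln (mix_density \<sigma> x w) = ln ((2 * pi * \<sigma>\<^sup>2) powr (- real CARD('n) / 2)) + ln ?S"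
    unfolding e by (rule ln_mult_pos[OF P0 S0])
  also have "ln ((2 * pi * \<sigma>\<^sup>2) powr (- real CARD('n) / 2)) = - (real CARD('n) / 2) * ln (2 * pi * \<sigma>\<^sup>2)"
    using \<sigma> by (simp add: ln_powr)
  finally show ?thesis unfolding Hx_def by simp
qed

lemma mix_int1:
  assumes \<sigma>: "\<sigma> > 0"
  shows "(\<integral>\<^sup>+x. ennreal (mix_density \<sigma> x (w::real^'n::finite^'q::finite)) \<partial>lborel) = 1"
proof -
  define q where "q = real CARD('q)"
  have q1: "1 \<le> q" unfolding q_def by simp
  have m: "(\<lambda>x. ennreal (1 / q * gd \<sigma> (x - w$j))) \<in> borel_measurable lborel" for j
    unfolding measurable_lborel2 by (intro cont_meas1 continuous_intros)
  have "(\<integral>\<^sup>+x. ennreal (mix_density \<sigma> x w) \<partial>lborel) = (\<integral>\<^sup>+x. (\<Sum>j\<in>UNIV. ennreal (1 / q * gd \<sigma> (x - w$j))) \<partial>lborel)"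
    unfolding mix_gd q_def[symmetric] sum_distrib_left
    using q1 by (intro nn_integral_cong) (simp add: gd_nonneg)
  also have "\<dots> = (\<Sum>j\<in>UNIV. (\<integral>\<^sup>+x. ennreal (1 / q * gd \<sigma> (x - w$j)) \<partial>lborel))"
    by (rule nn_integral_sum) (rule m)
  also have "\<dots> = (\<Sum>j\<in>(UNIV::'q set). ennreal (1 / q))"
    by (intro sum.cong refl gd_int_c) (use q1 \<sigma> in auto)
  also have "\<dots> = ennreal (\<Sum>j\<in>(UNIV::'q set). 1 / q)"
    using q1 by (subst sum_ennreal) auto
  also have "\<dots> = ennreal (q * (1 / q))" by (simp add: q_def)
  also have "\<dots> = 1" using q1 by simp
  finally show ?thesis .
qed



theorem lemma1:
  fixes \<sigma> s \<mu> :: real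
  assumes "\<sigma> > 0" and "s > 0" and "\<mu> = s\<^sup>2 / \<sigma>\<^sup>2"
  shows "- (\<integral>w. W_density s (w :: real^'n::finite^'q::finite) *
              (\<integral>x. mix_density \<sigma> x w * ln (mix_density \<sigma> x w) \<partial>lborel) \<partial>lborel)
    = real CARD('n) / 2 * ln (2 * pi * \<sigma>\<^sup>2)
      - (\<mu> / real CARD('q)) powr (real CARD('n) / 2)
        * (2 * pi) powr (- (real CARD('q) * real CARD('n)) / 2)
        * (1 / real CARD('q))
        * (\<Sum>j\<in>UNIV. \<integral>z.
             exp (- 1/2 * (\<Sum>a\<in>UNIV. (norm ((z :: real^'n^'q) $ a))\<^sup>2)
                  + 1 / (2 * real CARD('q)) * (norm (\<Sum>a\<in>UNIV. z $ a))\<^sup>2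
                  - \<mu> / 2 * (norm (z $ j))\<^sup>2)
             * ln (1 / real CARD('q) * (\<Sum>k\<in>UNIV. exp (- \<mu> / 2 * (norm (z $ k))\<^sup>2))) \<partial>lborel)"
proof -
  note \<sigma> = assms(1) and s = assms(2) and \<mu> = assms(3)
  define L where "L = ln (2 * pi * \<sigma>\<^sup>2)"
  define B where "B = ln (real CARD('q)) + 2 * 2 powr (real CARD('n) / 2)"
  define q where "q = real CARD('q)"
  define K where "K = (\<mu> / real CARD('q)) powr (real CARD('n) / 2) * (2 * pi) powr (- (real CARD('q) * real CARD('n)) / 2)"
  define Ap where "Ap = (\<lambda>w::real^'n^'q. \<integral>\<^sup>+x. ennreal (mix_density \<sigma> x w * Hx \<sigma> x w) \<partial>lborel)"
  define Rp where "Rp = (\<lambda>j::'q. \<integral>\<^sup>+z. ennreal (Wj \<mu> j (z::real^'n^'q) * Hz \<mu> z) \<partial>lborel)"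
  have gd_lmeas: "gd s \<in> borel_measurable (lborel :: (real^'n^'q) measure)" by simp
  have q1: "1 \<le> q" unfolding q_def by simp
  have \<mu>0: "0 < \<mu>" using \<mu> s \<sigma> by simp
  have K0: "0 < K" unfolding K_def using \<mu>0 by simp
  have Ap_le: "Ap w \<le> ennreal B" for w unfolding Ap_def B_def by (rule Aplus_bound[OF \<sigma>])
  have Ap_fin: "Ap w < \<infinity>" for w using Ap_le[of w] by (simp add: le_less_trans)
  have inner: "(\<integral>x. mix_density \<sigma> x w * ln (mix_density \<sigma> x w) \<partial>lborel) = - (real CARD('n) / 2) * L - enn2real (Ap w)" for w
  proof -
    have pt: "mix_density \<sigma> x w * ln (mix_density \<sigma> x w) = (- (real CARD('n) / 2) * L) * mix_density \<sigma> x w - mix_density \<sigma> x w * Hx \<sigma> x w" for x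
      unfolding mix_ln[OF \<sigma>] L_def by (simp add: algebra_simps)
    have f1: "(\<integral>\<^sup>+x. ennreal (mix_density \<sigma> x w) \<partial>lborel) < \<infinity>" by (simp add: mix_int1[OF \<sigma>])
    note i1 = integrable_nn[OF mix_meas mix_nonneg f1]
    have nn2: "0 \<le> mix_density \<sigma> x w * Hx \<sigma> x w" for x by (intro mult_nonneg_nonneg mix_nonneg Hx_nonneg)
    have f2: "(\<integral>\<^sup>+x. ennreal (mix_density \<sigma> x w * Hx \<sigma> x w) \<partial>lborel) < \<infinity>" using Ap_fin[of w] unfolding Ap_def .
    note i2 = integrable_nn[OF mixH_meas nn2 f2]
    have "(\<integral>x. mix_density \<sigma> x w * ln (mix_density \<sigma> x w) \<partial>lborel)
        = (\<integral>x. (- (real CARD('n) / 2) * L) * mix_density \<sigma> x w - mix_density \<sigma> x w * Hx \<sigma> x w \<partial>lborel)"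
      unfolding pt ..
    also have "\<dots> = (- (real CARD('n) / 2) * L) * (\<integral>x. mix_density \<sigma> x w \<partial>lborel) - (\<integral>x. mix_density \<sigma> x w * Hx \<sigma> x w \<partial>lborel)"
      by (subst Bochner_Integration.integral_diff[OF integrable_mult_right[OF i1(1)] i2(1)]) simp
    also have "\<dots> = - (real CARD('n) / 2) * L - enn2real (Ap w)"
      unfolding i1(2) i2(2) Ap_def mix_int1[OF \<sigma>] by simp
    finally show ?thesis .
  qed
  have total: "(\<integral>\<^sup>+w. ennreal (gd s w) * Ap w \<partial>lborel) = (\<Sum>j\<in>UNIV. ennreal (1 / q) * (ennreal K * Rp j))"
  proof -
    define t where "t = (\<lambda>j x (w::real^'n^'q). gd s w * gd \<sigma> (x - w$j) * Hx \<sigma> x w)"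
    have t0: "0 \<le> t j x w" for j x w unfolding t_def by (intro mult_nonneg_nonneg gd_nonneg Hx_nonneg)
    have mt: "(\<lambda>x. ennreal (t j x w)) \<in> borel_measurable lborel" for j w
      unfolding t_def measurable_lborel2 by (intro cont_meas1 continuous_intros)
    have mtw: "(\<lambda>w. \<integral>\<^sup>+x. ennreal (t j x w) \<partial>lborel) \<in> borel_measurable lborel" for j
    proof (rule lborel.borel_measurable_nn_integral)
      show "(\<lambda>(w, x). ennreal (t j x w)) \<in> borel_measurable (lborel \<Otimes>\<^sub>M lborel)"
        unfolding t_def by (rule cont_meas2) (intro continuous_intros)
    qed
    have pt: "ennreal (gd s w) * ennreal (mix_density \<sigma> x w * Hx \<sigma> x w) = (\<Sum>j\<in>UNIV. ennreal (1 / q) * ennreal (t j x w))" for x w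
    proof -
      have "ennreal (gd s w) * ennreal (mix_density \<sigma> x w * Hx \<sigma> x w) = ennreal (gd s w * (mix_density \<sigma> x w * Hx \<sigma> x w))"
        by (rule ennreal_mult[symmetric]) (auto intro: gd_nonneg mult_nonneg_nonneg mix_nonneg Hx_nonneg)
      also have "gd s w * (mix_density \<sigma> x w * Hx \<sigma> x w) = (\<Sum>j\<in>UNIV. 1 / q * t j x w)"
        unfolding mix_gd t_def q_def by (simp add: sum_distrib_left sum_distrib_right ac_simps)
      also have "ennreal (\<Sum>j\<in>UNIV. 1 / q * t j x w) = (\<Sum>j\<in>UNIV. ennreal (1 / q * t j x w))"
        using q1 t0 by (intro sum_ennreal[symmetric]) simp
      also have "\<dots> = (\<Sum>j\<in>UNIV. ennreal (1 / q) * ennreal (t j x w))"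
        using q1 t0 by (intro sum.cong refl ennreal_mult) auto
      finally show ?thesis .
    qed
    have "(\<integral>\<^sup>+w. ennreal (gd s w) * Ap w \<partial>lborel)
        = (\<integral>\<^sup>+w. \<integral>\<^sup>+x. ennreal (gd s (w::real^'n^'q)) * ennreal (mix_density \<sigma> x w * Hx \<sigma> x w) \<partial>lborel \<partial>lborel)"
      unfolding Ap_def
      by (intro nn_integral_cong) (rule nn_integral_cmult[symmetric], rule measurable_compose[OF mixH_meas measurable_ennreal])
    also have "\<dots> = (\<integral>\<^sup>+w. \<integral>\<^sup>+x. (\<Sum>j\<in>UNIV. ennreal (1 / q) * ennreal (t j x w)) \<partial>lborel \<partial>lborel)"
      unfolding pt ..
    also have "\<dots> = (\<integral>\<^sup>+w. (\<Sum>j\<in>UNIV. ennreal (1 / q) * (\<integral>\<^sup>+x. ennreal (t j x w) \<partial>lborel)) \<partial>lborel)"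
      by (intro nn_integral_cong, subst nn_integral_sum) (auto intro!: borel_measurable_times_ennreal mt[unfolded measurable_lborel2] simp: nn_integral_cmult[OF mt])
    also have "\<dots> = (\<Sum>j\<in>UNIV. ennreal (1 / q) * (\<integral>\<^sup>+w. \<integral>\<^sup>+x. ennreal (t j x w) \<partial>lborel \<partial>lborel))"
      by (subst nn_integral_sum) (auto intro!: borel_measurable_times_ennreal mtw[unfolded measurable_lborel2] simp: nn_integral_cmult[OF mtw])
    also have "\<dots> = (\<Sum>j\<in>UNIV. ennreal (1 / q) * (ennreal K * Rp j))"
      unfolding t_def K_def Rp_def by (intro sum.cong refl arg_cong[where f="\<lambda>v. ennreal (1 / q) * v"] main_T[OF s \<sigma> \<mu>])
    finally show ?thesis .
  qed
  have DA_le: "(\<integral>\<^sup>+w. ennreal (gd s w) * Ap w \<partial>lborel) \<le> ennreal B"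
  proof -
    have "(\<integral>\<^sup>+w. ennreal (gd s w) * Ap w \<partial>lborel) \<le> (\<integral>\<^sup>+w. ennreal (gd s (w::real^'n^'q)) * ennreal B \<partial>lborel)"
      by (intro nn_integral_mono mult_left_mono Ap_le) auto
    also have "\<dots> = ennreal B"
      by (simp add: nn_integral_multc[OF measurable_compose[OF gd_lmeas measurable_ennreal]] gd_int0[OF s])
    finally show ?thesis .
  qed
  have Rp_fin: "Rp j < \<infinity>" for j
  proof -
    have "ennreal (1 / q) * (ennreal K * Rp j) \<le> (\<Sum>j\<in>UNIV. ennreal (1 / q) * (ennreal K * Rp j))"
      by (rule member_le_sum) auto
    also have "\<dots> \<le> ennreal B" using DA_le unfolding total .
    finally have "ennreal (1 / q) * (ennreal K * Rp j) < \<infinity>" by (simp add: le_less_trans)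
    then show ?thesis using K0 q1 by (auto simp: ennreal_mult_less_top top.not_eq_extremum)
  qed
  define R where "R = (\<lambda>j. enn2real (Rp j))"
  have Rp_eq: "Rp j = ennreal (R j)" for j unfolding R_def using Rp_fin[of j] by simp
  have R0: "0 \<le> R j" for j unfolding R_def by simp
  have total_real: "enn2real (\<integral>\<^sup>+w. ennreal (gd s w) * Ap w \<partial>lborel) = (\<Sum>j\<in>UNIV. 1 / q * (K * R j))"
  proof -
    have "(\<Sum>j\<in>UNIV. ennreal (1 / q) * (ennreal K * Rp j)) = (\<Sum>j\<in>UNIV. ennreal (1 / q * (K * R j)))"
      using K0 q1 R0 by (intro sum.cong refl) (simp add: Rp_eq ennreal_mult[symmetric])
    also have "\<dots> = ennreal (\<Sum>j\<in>UNIV. 1 / q * (K * R j))"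
      using K0 q1 R0 by (intro sum_ennreal) simp
    finally show ?thesis unfolding total using K0 q1 R0 by (simp add: sum_nonneg)
  qed
  have DA: "integrable lborel (\<lambda>w. gd s w * enn2real (Ap w))"
       "(\<integral>w. gd s w * enn2real (Ap w) \<partial>lborel) = enn2real (\<integral>\<^sup>+w. ennreal (gd s w) * Ap w \<partial>lborel)"
  proof -
    have mA: "Ap \<in> borel_measurable lborel"
      unfolding Ap_def
    proof (rule lborel.borel_measurable_nn_integral)
      show "(\<lambda>(w::real^'n^'q, x::real^'n). ennreal (mix_density \<sigma> x w * Hx \<sigma> x w)) \<in> borel_measurable (lborel \<Otimes>\<^sub>M lborel)"
        unfolding mix_gd by (rule cont_meas2) (intro continuous_intros)
    qed
    have m: "(\<lambda>w. gd s w * enn2real (Ap w)) \<in> borel_measurable lborel"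
      by (intro borel_measurable_times gd_lmeas measurable_compose[OF mA borel_measurable_enn2real] borel_measurable_continuous_onI[OF continuous_on_id])
    have nn: "0 \<le> gd s w * enn2real (Ap w)" for w by (simp add: gd_nonneg)
    have eq: "(\<integral>\<^sup>+w. ennreal (gd s w * enn2real (Ap w)) \<partial>lborel) = (\<integral>\<^sup>+w. ennreal (gd s w) * Ap w \<partial>lborel)"
      using Ap_fin by (intro nn_integral_cong) (simp add: ennreal_mult gd_nonneg)
    have f: "(\<integral>\<^sup>+w. ennreal (gd s w * enn2real (Ap w)) \<partial>lborel) < \<infinity>"
      unfolding eq using DA_le by (simp add: le_less_trans)
    note i = integrable_nn[OF m nn f]
    show "integrable lborel (\<lambda>w. gd s w * enn2real (Ap w))" by (rule i(1))
    show "(\<integral>w. gd s w * enn2real (Ap w) \<partial>lborel) = enn2real (\<integral>\<^sup>+w. ennreal (gd s w) * Ap w \<partial>lborel)"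
      unfolding i(2) eq ..
  qed
  have D: "integrable lborel (\<lambda>w::real^'n^'q. gd s w)" "(\<integral>w. gd s (w::real^'n^'q) \<partial>lborel) = 1"
  proof -
    have f: "(\<integral>\<^sup>+w. ennreal (gd s (w::real^'n^'q)) \<partial>lborel) < \<infinity>" by (simp add: gd_int0[OF s])
    note i = integrable_nn[OF gd_lmeas gd_nonneg f]
    show "integrable lborel (\<lambda>w::real^'n^'q. gd s w)" by (rule i(1))
    show "(\<integral>w. gd s (w::real^'n^'q) \<partial>lborel) = 1" unfolding i(2) gd_int0[OF s] by simp
  qed
  have RHSj: "(\<integral>z. exp (- 1/2 * (\<Sum>a\<in>UNIV. (norm ((z :: real^'n^'q) $ a))\<^sup>2)
                  + 1 / (2 * real CARD('q)) * (norm (\<Sum>a\<in>UNIV. z $ a))\<^sup>2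
                  - \<mu> / 2 * (norm (z $ j))\<^sup>2)
             * ln (1 / real CARD('q) * (\<Sum>k\<in>UNIV. exp (- \<mu> / 2 * (norm (z $ k))\<^sup>2))) \<partial>lborel) = - R j" for j
  proof -
    have m: "(\<lambda>z. Wj \<mu> j z * Hz \<mu> (z::real^'n^'q)) \<in> borel_measurable lborel"
      unfolding measurable_lborel2 Wj_def by (intro borel_measurable_continuous_onI continuous_intros)
    have nn: "0 \<le> Wj \<mu> j z * Hz \<mu> (z::real^'n^'q)" for z
      using \<mu>0 by (intro mult_nonneg_nonneg Hz_nonneg) (auto simp: Wj_def)
    have f: "(\<integral>\<^sup>+z. ennreal (Wj \<mu> j z * Hz \<mu> (z::real^'n^'q)) \<partial>lborel) < \<infinity>" using Rp_fin[of j] unfolding Rp_def .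
    note i = integrable_nn[OF m nn f]
    have "(\<integral>z. exp (- 1/2 * (\<Sum>a\<in>UNIV. (norm ((z :: real^'n^'q) $ a))\<^sup>2)
                  + 1 / (2 * real CARD('q)) * (norm (\<Sum>a\<in>UNIV. z $ a))\<^sup>2
                  - \<mu> / 2 * (norm (z $ j))\<^sup>2)
             * ln (1 / real CARD('q) * (\<Sum>k\<in>UNIV. exp (- \<mu> / 2 * (norm (z $ k))\<^sup>2))) \<partial>lborel)
       = (\<integral>z. - (Wj \<mu> j z * Hz \<mu> (z::real^'n^'q)) \<partial>lborel)"
      unfolding Wj_def Hz_def by simp
    also have "\<dots> = - R j" unfolding Bochner_Integration.integral_minus i(2) R_def Rp_def ..
    finally show ?thesis .
  qed
  have "- (\<integral>w. W_density s (w :: real^'n::finite^'q::finite) *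
              (\<integral>x. mix_density \<sigma> x w * ln (mix_density \<sigma> x w) \<partial>lborel) \<partial>lborel)
      = - (\<integral>w. - (real CARD('n) / 2 * L * gd s w + gd s w * enn2real (Ap w)) \<partial>lborel)"
    using s by (intro arg_cong[where f=uminus] Bochner_Integration.integral_cong refl) (simp add: W_density_gd inner algebra_simps)
  also have "\<dots> = real CARD('n) / 2 * L + (\<Sum>j\<in>UNIV. 1 / q * (K * R j))"
    using D DA by (simp add: total_real)
  also have "\<dots> = real CARD('n) / 2 * L - K * (1 / q) * (\<Sum>j\<in>UNIV. - R j)"
    by (simp add: sum_negf sum_distrib_left sum_divide_distrib algebra_simps)
  finally have X: "- (\<integral>w. W_density s (w :: real^'n::finite^'q::finite) *
              (\<integral>x. mix_density \<sigma> x w * ln (mix_density \<sigma> x w) \<partial>lborel) \<partial>lborel)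
      = real CARD('n) / 2 * L - K * (1 / q) * (\<Sum>j\<in>UNIV. - R j)" .
  show ?thesis
    unfolding sum.cong[OF refl RHSj] using X unfolding K_def q_def L_def .
qed


end
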